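(* Let $k$ be a binary kernel on a non-empty set $\mathcal X$ such that the quotient set $\mathcal Q_k=\mathcal X_{\mathrm{ref}}/\!\sim_k$ is finite, say $\mathcal Q_k=\{Q_1,\dots,Q_d\}$. Define $\phi:\mathcal X\to\{0,1\}^d$ by $\phi(x)_i=1$ if $x\in\mathcal X_{\mathrm{ref}}$ and $Q_i=[x]_k$, and $\phi(x)_i=0$ otherwise. Then $\phi$ is a feature map of $k$, i.e. $k(x,y)=\langle\phi(x),\phi(y)\rangle$ for all $x,y\in\mathcal X$.
   Context: A kernel on $\mathcal X$ is a symmetric positive semidefinite function $k:\mathcal X\times\mathcal X\to\mathbb R$. A kernel $k$ is binary if $k(x,y)\in\{0,1\}$ for all $x,y$. The relation induced by $k$ is $\sim_k=\{(x,y): k(x,y)=1\}$. Let $\mathcal X_{\mathrm{ref}}=\{x\in\mathcal X: x\sim_k x\}$; on $\mathcal X_{\mathrm{ref}}$ the relation $\sim_k$ is an equivalence relation, $[x]_k$ denotes the equivalence class of $x\in\mathcal X_{\mathrm{ref}}$, and $\mathcal Q_k$ is the set of equivalence classes. *)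

theory Defs
  imports Complex_Main
begin

definition kernel_on :: "'a set \<Rightarrow> ('a \<Rightarrow> 'a \<Rightarrow> real) \<Rightarrow> bool" where
  "kernel_on X k \<longleftrightarrow>
     (\<forall>x\<in>X. \<forall>y\<in>X. k x y = k y x) \<and>
     (\<forall>(n::nat) (xs::nat \<Rightarrow> 'a) (c::nat \<Rightarrow> real). (\<forall>i<n. xs i \<in> X) \<longrightarrow>
        0 \<le> (\<Sum>i<n. \<Sum>j<n. c i * c j * k (xs i) (xs j)))"

definition binary_kernel_on :: "'a set \<Rightarrow> ('a \<Rightarrow> 'a \<Rightarrow> real) \<Rightarrow> bool" where
  "binary_kernel_on X k \<longleftrightarrow> kernel_on X k \<and> (\<forall>x\<in>X. \<forall>y\<in>X. k x y \<in> {0, 1})"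

definition krel :: "'a set \<Rightarrow> ('a \<Rightarrow> 'a \<Rightarrow> real) \<Rightarrow> ('a \<times> 'a) set" where
  "krel X k = {(x, y). x \<in> X \<and> y \<in> X \<and> k x y = 1}"

definition Xref :: "'a set \<Rightarrow> ('a \<Rightarrow> 'a \<Rightarrow> real) \<Rightarrow> 'a set" where
  "Xref X k = {x \<in> X. (x, x) \<in> krel X k}"

text \<open>The relation restricted to X_ref (an equivalence relation there).\<close>
definition krel_ref :: "'a set \<Rightarrow> ('a \<Rightarrow> 'a \<Rightarrow> real) \<Rightarrow> ('a \<times> 'a) set" where
  "krel_ref X k = krel X k \<inter> (Xref X k \<times> Xref X k)"

definition kclass :: "'a set \<Rightarrow> ('a \<Rightarrow> 'a \<Rightarrow> real) \<Rightarrow> 'a \<Rightarrow> 'a set" where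
  "kclass X k x = krel_ref X k `` {x}"

definition Qk :: "'a set \<Rightarrow> ('a \<Rightarrow> 'a \<Rightarrow> real) \<Rightarrow> 'a set set" where
  "Qk X k = Xref X k // krel_ref X k"

end

theory Submission
  imports Defs
begin

lemma psd2:
  assumes "kernel_on X k" "x \<in> X" "y \<in> X"
  shows "0 \<le> a*a*k x x + a*b*k x y + b*a*k y x + b*b*k y y"
proof -
  have "\<forall>i<2. (\<lambda>i::nat. if i = 0 then x else y) i \<in> X" using assms by auto
  then have "0 \<le> (\<Sum>i<2. \<Sum>j<2. (\<lambda>i::nat. if i = 0 then a else b) i * (\<lambda>i::nat. if i = 0 then a else b) j
      * k ((\<lambda>i::nat. if i = 0 then x else y) i) ((\<lambda>i::nat. if i = 0 then x else y) j))"
    using assms(1) unfolding kernel_on_def by (intro mp[OF spec[OF spec[OF spec[OF conjunct2[OF assms(1)[unfolded kernel_on_def]]]]]]) 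
  then show ?thesis by (simp add: numeral_2_eq_2)
qed

lemma psd3:
  assumes "kernel_on X k" "x \<in> X" "y \<in> X" "z \<in> X"
  shows "0 \<le> k x x + k y y + k z z - k x y - k y x + k x z + k z x - k y z - k z y"
proof -
  define xs :: "nat \<Rightarrow> 'a" where "xs = (\<lambda>i. if i = 0 then x else if i = 1 then y else z)"
  define c :: "nat \<Rightarrow> real" where "c = (\<lambda>i. if i = 1 then -1 else 1)"
  have "\<forall>i<3. xs i \<in> X" using assms by (auto simp: xs_def)
  then have "0 \<le> (\<Sum>i<3. \<Sum>j<3. c i * c j * k (xs i) (xs j))"
    using assms(1) unfolding kernel_on_def by blast
  then show ?thesis by (simp add: numeral_3_eq_3 xs_def c_def)
qed

theorem proposition3:
  fixes X :: "'a set" and k :: "'a \<Rightarrow> 'a \<Rightarrow> real"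
    and d :: nat and Q :: "nat \<Rightarrow> 'a set" and phi :: "'a \<Rightarrow> nat \<Rightarrow> real"
  assumes "X \<noteq> {}"
    and "binary_kernel_on X k"
    and "finite (Qk X k)"
    and "bij_betw Q {1..d} (Qk X k)"
    and "\<And>x i. phi x i = (if x \<in> Xref X k \<and> Q i = kclass X k x then 1 else 0)"
  shows "\<forall>x\<in>X. \<forall>y\<in>X. k x y = (\<Sum>i=1..d. phi x i * phi y i)"
proof (intro ballI)
  fix x y assume x: "x \<in> X" and y: "y \<in> X"
  have K: "kernel_on X k" and B: "\<And>u v. u \<in> X \<Longrightarrow> v \<in> X \<Longrightarrow> k u v = 0 \<or> k u v = 1"
    using assms(2) unfolding binary_kernel_on_def by auto
  have S: "\<And>u v. u \<in> X \<Longrightarrow> v \<in> X \<Longrightarrow> k u v = k v u" using K unfolding kernel_on_def by blast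
  have Z: "k u v = 0" if "u \<in> X" "v \<in> X" "k u u = 0" for u v
  proof (rule ccontr)
    assume "k u v \<noteq> 0"
    then have "k u v = 1" "k v u = 1" using B S that by metis+
    moreover have "0 \<le> 1*1*k u u + 1*(-1)*k u v + (-1)*1*k v u + (-1)*(-1)*k v v"
      using psd2[OF K that(1,2)] .
    moreover have "k v v \<le> 1" using B that by (metis order_refl zero_le_one)
    ultimately show False using that by simp
  qed
  have T: "k u w = 1" if "u \<in> X" "v \<in> X" "w \<in> X" "k u u = 1" "k v v = 1" "k w w = 1"
      "k u v = 1" "k v w = 1" for u v w
  proof (rule ccontr)
    assume "k u w \<noteq> 1"
    then have "k u w = 0" "k w u = 0" using B S that by metis+
    moreover have "k v u = 1" "k w v = 1" using S that by metis+
    moreover note psd3[OF K that(1,2,3)]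
    ultimately show False using that by simp
  qed
  have Xr: "u \<in> Xref X k \<longleftrightarrow> u \<in> X \<and> k u u = 1" for u
    by (auto simp: Xref_def krel_def)
  have cl: "kclass X k u = {v. v \<in> X \<and> k v v = 1 \<and> k u v = 1}" if "u \<in> Xref X k" for u
    using that by (auto simp: kclass_def krel_ref_def krel_def Xr)
  show "k x y = (\<Sum>i=1..d. phi x i * phi y i)"
  proof (cases "x \<in> Xref X k \<and> y \<in> Xref X k")
    case False
    then have "k x y = 0" using Z x y Xr S B by metis
    moreover have "phi x i * phi y i = 0" for i using False assms(5) by simp
    ultimately show ?thesis by (metis (no_types, lifting) sum.neutral)
  next
    case True
    then have kx: "k x x = 1" and ky: "k y y = 1" using Xr by auto
    show ?thesis
    proof (cases "k x y = 1")
      case False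
      then have "k x y = 0" using B x y by metis
      have "kclass X k x \<noteq> kclass X k y"
      proof
        assume "kclass X k x = kclass X k y"
        moreover have "y \<in> kclass X k y" using cl True y ky by auto
        ultimately have "y \<in> kclass X k x" by simp
        then show False using cl True False by auto
      qed
      then have "phi x i * phi y i = 0" for i using assms(5) by auto
      then show ?thesis using \<open>k x y = 0\<close> by (metis (no_types, lifting) sum.neutral)
    next
      case True1: True
      have eq: "kclass X k x = kclass X k y"
      proof -
        have "k y x = 1" using S x y True1 by metis
        have "k x v = 1 \<longleftrightarrow> k y v = 1" if "v \<in> X" "k v v = 1" for v
          using T[OF x y that(1) kx ky that(2) True1] T[OF y x that(1) ky kx that(2) \<open>k y x = 1\<close>]
          by blast
        then show ?thesis using cl True by auto
      qed
      have mem: "kclass X k x \<in> Qk X k" unfolding Qk_def kclass_def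
        using True by (simp add: quotientI)
      then obtain i0 where i0: "i0 \<in> {1..d}" "Q i0 = kclass X k x"
        using assms(4) unfolding bij_betw_def by (metis imageE)
      have "phi x i * phi y i = (if i = i0 then 1 else 0)" if "i \<in> {1..d}" for i
      proof -
        have "Q i = kclass X k x \<longleftrightarrow> i = i0"
          using assms(4) i0 that unfolding bij_betw_def inj_on_def by metis
        then show ?thesis using assms(5) True eq by auto
      qed
      then have "(\<Sum>i=1..d. phi x i * phi y i) = (\<Sum>i=1..d. if i = i0 then 1 else 0)"
        by (rule sum.cong[OF refl])
      also have "\<dots> = 1" using i0(1) by simp
      finally show ?thesis using True1 by simp
    qed
  qed
qed

end
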